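(* Let $S(t)$ be the semigroup on $\boldsymbol L^2_\sigma(\Gamma)$ generated by (NS) under (C1)–(C2), and let $\mathcal J$ and $\mathcal I$ be as defined in the context. Then: (A) $\mathcal J$ is invariant: $S(t)\mathcal J=\mathcal J$ for all $t\ge0$. (B) If a closed set $\mathcal D\subset\boldsymbol L^2_\sigma(\Gamma)$ attracts all bounded sets, i.e. $\lim_{t\to\infty}{\rm dist}(S(t)B,\mathcal D)=0$ for every bounded $B\subset\boldsymbol L^2_\sigma(\Gamma)$, then $\mathcal J\subset\mathcal D$. (C) If $A\subset\boldsymbol L^2_\sigma(\Gamma)$ is a nonempty bounded invariant set, then $A\subset\mathcal I\subset\mathcal J$; in particular $\mathcal J\neq\emptyset$.
   Context: $\Gamma\subset\mathbb R^3$ is a smooth, compact, connected, embedded two-dimensional surface without boundary; $\|\cdot\|$ is the norm of $\boldsymbol L^2(\Gamma)$ (tangential fields), $\boldsymbol L^2_\sigma(\Gamma)=\{\boldsymbol v\in\boldsymbol L^2(\Gamma):{\rm div}_\Gamma\boldsymbol v=0\}$. (NS) is the tangential surface Navier–Stokes problem $\partial_t\boldsymbol u+(\boldsymbol u\cdot\nabla_\Gamma)\boldsymbol u-2\mathbf P_\Gamma{\rm div}_\Gamma(\nu\boldsymbol\varepsilon_\Gamma(\boldsymbol u))+\nabla_\Gamma p=\boldsymbol f(\cdot,\boldsymbol u)$, ${\rm div}_\Gamma\boldsymbol u=0$, $\boldsymbol u(0)=\boldsymbol u_0$, with $\nu\in W^{1,\infty}(\Gamma)$, $\nu\ge\nu_*>0$,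 and Carathéodory $\boldsymbol f$ satisfying (C1) $\|\boldsymbol f(\cdot,\boldsymbol 0)\|\le C_1$, (C2) $\|\boldsymbol f(\cdot,\boldsymbol v_1)-\boldsymbol f(\cdot,\boldsymbol v_2)\|\le C_2\|\boldsymbol v_1-\boldsymbol v_2\|$; $S(t)\boldsymbol u_0$ is the value at time $t$ of its unique global weak solution, a continuous semigroup on $\boldsymbol L^2_\sigma(\Gamma)$. ${\rm dist}(A,B)=\sup_{a\in A}\inf_{b\in B}\|a-b\|$; a set is invariant if $S(t)A=A$ for all $t\ge0$. A complete trajectory is a map $\xi:\mathbb R\to\boldsymbol L^2_\sigma(\Gamma)$ with $S(t)\xi(s)=\xi(t+s)$ for all $t\ge0$, $s\in\mathbb R$; it is bounded-in-the-past if $\xi((-\infty,0])$ is bounded, bounded if $\xi(\mathbb R)$ is bounded. $\mathcal J:=\{\xi(0):\xi$ a bounded-in-the-past complete trajectory$\}$ and $\mathcal I:=\{\xi(0):\xi$ a bounded complete trajectory$\}$. *)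

theory Defs
  imports "HOL-Analysis.Analysis" "HOL-Library.Extended_Real"
begin

text \<open>Abstract setting: the phase space L2_sigma(Gamma) is modelled by a real Hilbert
space type 'a; S t x is the value at time t of the solution starting at x.\<close>

definition semigroup :: "(real \<Rightarrow> 'a \<Rightarrow> 'a) \<Rightarrow> bool" where
  "semigroup S \<longleftrightarrow> (\<forall>x. S 0 x = x) \<and>
     (\<forall>t s x. t \<ge> 0 \<longrightarrow> s \<ge> 0 \<longrightarrow> S (t + s) x = S t (S s x))"

definition continuous_semigroup :: "(real \<Rightarrow> 'a::topological_space \<Rightarrow> 'a) \<Rightarrow> bool" where
  "continuous_semigroup S \<longleftrightarrow> semigroup S \<and>
     (\<forall>t\<ge>0. continuous_on UNIV (S t)) \<and> (\<forall>x. continuous_on {0..} (\<lambda>t. S t x))"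

definition complete_trajectory :: "(real \<Rightarrow> 'a \<Rightarrow> 'a) \<Rightarrow> (real \<Rightarrow> 'a) \<Rightarrow> bool" where
  "complete_trajectory S \<xi> \<longleftrightarrow> (\<forall>t s. t \<ge> 0 \<longrightarrow> S t (\<xi> s) = \<xi> (t + s))"

definition J_set :: "(real \<Rightarrow> 'a::metric_space \<Rightarrow> 'a) \<Rightarrow> 'a set" where
  "J_set S = {\<xi> 0 | \<xi>. complete_trajectory S \<xi> \<and> bounded (\<xi> ` {..0})}"

definition I_set :: "(real \<Rightarrow> 'a::metric_space \<Rightarrow> 'a) \<Rightarrow> 'a set" where
  "I_set S = {\<xi> 0 | \<xi>. complete_trajectory S \<xi> \<and> bounded (range \<xi>)}"

text \<open>Hausdorff semidistance dist(A,B) = sup_{a in A} inf_{b in B} |a-b|, valued in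
extended reals (inf over empty B is +infinity; sup over empty A is 0).\<close>

definition semidist :: "'a::metric_space set \<Rightarrow> 'a set \<Rightarrow> ereal" where
  "semidist A B = Sup (insert 0 ((\<lambda>a. Inf ((\<lambda>b. ereal (dist a b)) ` B)) ` A))"

definition invariant_set :: "(real \<Rightarrow> 'a \<Rightarrow> 'a) \<Rightarrow> 'a set \<Rightarrow> bool" where
  "invariant_set S A \<longleftrightarrow> (\<forall>t\<ge>0. S t ` A = A)"

end

theory Submission
  imports Defs
begin

lemma sg0: "semigroup S \<Longrightarrow> S 0 x = x" by (simp add: semigroup_def)
lemma sgadd: "semigroup S \<Longrightarrow> t \<ge> 0 \<Longrightarrow> s \<ge> 0 \<Longrightarrow> S (t + s) x = S t (S s x)"
  by (simp add: semigroup_def)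

lemma memJ: fixes S :: "real \<Rightarrow> 'a::metric_space \<Rightarrow> 'a" and \<eta> :: "real \<Rightarrow> 'a"
 assumes "complete_trajectory S \<eta>" "bounded (\<eta> ` {..0})"
 shows "\<eta> 0 \<in> J_set S"
  unfolding J_set_def mem_Collect_eq using assms by (intro exI[where x=\<eta>]) simp

lemma memI: fixes S :: "real \<Rightarrow> 'a::metric_space \<Rightarrow> 'a" and \<eta> :: "real \<Rightarrow> 'a"
 assumes "complete_trajectory S \<eta>" "bounded (range \<eta>)"
 shows "\<eta> 0 \<in> I_set S"
  unfolding I_set_def mem_Collect_eq using assms by (intro exI[where x=\<eta>]) simp

lemma J_forward:
  fixes S :: "real \<Rightarrow> 'a::metric_space \<Rightarrow> 'a"
  assumes cs: "continuous_semigroup S" and t: "t \<ge> 0" and x: "x \<in> J_set S"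
  shows "S t x \<in> J_set S"
proof -
  obtain \<xi> where xi: "x = \<xi> 0" "complete_trajectory S \<xi>" "bounded (\<xi> ` {..0})"
    using x unfolding J_set_def by blast
  define \<eta> where "\<eta> = (\<lambda>s. \<xi> (s + t))"
  have ct: "complete_trajectory S \<eta>"
    using xi(2) unfolding complete_trajectory_def \<eta>_def by (simp add: add.assoc)
  have cont: "continuous_on {0..t} (\<lambda>r. S r (\<xi> 0))"
    using cs unfolding continuous_semigroup_def
    by (meson atLeastAtMost_iff atLeast_iff continuous_on_subset subsetI)
  have bd2: "bounded ((\<lambda>r. S r (\<xi> 0)) ` {0..t})"
    by (rule compact_imp_bounded, rule compact_continuous_image[OF cont], simp)
  have "\<eta> ` {..0} \<subseteq> \<xi> ` {..0} \<union> (\<lambda>r. S r (\<xi> 0)) ` {0..t}"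
  proof
    fix y assume "y \<in> \<eta> ` {..0}"
    then obtain s where s: "s \<le> 0" "y = \<xi> (s + t)" unfolding \<eta>_def by auto
    show "y \<in> \<xi> ` {..0} \<union> (\<lambda>r. S r (\<xi> 0)) ` {0..t}"
    proof (cases "s + t \<le> 0")
      case True then show ?thesis using s by auto
    next
      case False
      then have "\<xi> (s + t) = S (s + t) (\<xi> 0)"
        using xi(2) unfolding complete_trajectory_def by (metis add.right_neutral less_eq_real_def not_le)
      then show ?thesis using s False by auto
    qed
  qed
  then have bb: "bounded (\<eta> ` {..0})"
    using bounded_Un bounded_subset bd2 xi(3) by blast
  have e0: "\<eta> 0 = S t x"
    using xi(1,2) t unfolding \<eta>_def complete_trajectory_def by simp
  show ?thesis using memJ[OF ct bb] unfolding e0 .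
qed

lemma J_backward:
  fixes S :: "real \<Rightarrow> 'a::metric_space \<Rightarrow> 'a"
  assumes t: "t \<ge> 0" and x: "x \<in> J_set S"
  shows "x \<in> S t ` J_set S"
proof -
  obtain \<xi> where xi: "x = \<xi> 0" "complete_trajectory S \<xi>" "bounded (\<xi> ` {..0})"
    using x unfolding J_set_def by blast
  define \<eta> where "\<eta> = (\<lambda>s. \<xi> (s - t))"
  have ct: "complete_trajectory S \<eta>"
    using xi(2) unfolding complete_trajectory_def \<eta>_def by (simp add: add_diff_eq)
  have "\<eta> ` {..0} \<subseteq> \<xi> ` {..0}" unfolding \<eta>_def using t by auto
  then have "bounded (\<eta> ` {..0})" using xi(3) bounded_subset by blast
  then have "\<eta> 0 \<in> J_set S" using memJ[OF ct] by blast
  moreover have "S t (\<eta> 0) = x"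
    using xi(1,2) t unfolding \<eta>_def complete_trajectory_def by simp
  ultimately show ?thesis by blast
qed

lemma partB:
  fixes S :: "real \<Rightarrow> 'a::metric_space \<Rightarrow> 'a"
  assumes D: "closed D" and att: "\<forall>B. bounded B \<longrightarrow> ((\<lambda>t. semidist (S t ` B) D) \<longlongrightarrow> 0) at_top"
    and x: "x \<in> J_set S"
  shows "x \<in> D"
proof -
  obtain \<xi> where xi: "x = \<xi> 0" "complete_trajectory S \<xi>" "bounded (\<xi> ` {..0})"
    using x unfolding J_set_def by blast
  define c where "c = Inf ((\<lambda>b. ereal (dist x b)) ` D)"
  have le: "c \<le> semidist (S t ` (\<xi> ` {..0})) D" if "t \<ge> 0" for t
  proof -
    have "x = S t (\<xi> (-t))" using xi(1,2) that unfolding complete_trajectory_def by simp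
    then have "x \<in> S t ` (\<xi> ` {..0})" using that by auto
    then show ?thesis unfolding semidist_def c_def by (intro Sup_upper) auto
  qed
  have "c \<le> 0"
    apply (rule tendsto_lowerbound[OF att[rule_format, OF xi(3)]])
    using le eventually_ge_at_top[of 0] apply (metis (mono_tags, lifting) eventually_mono)
    by simp
  show ?thesis
  proof (rule closed_approachable[OF D, THEN iffD1], intro allI impI)
    fix e :: real assume e: "e > 0"
    then have "c < ereal e" using \<open>c \<le> 0\<close> by (meson ereal_less(2) le_less_trans zero_ereal_def)
    then obtain b where "b \<in> D" "ereal (dist x b) < ereal e"
      unfolding c_def Inf_less_iff by auto
    then show "\<exists>y\<in>D. dist y x < e" by (auto simp: dist_commute)
  qed
qed

lemma partC:
  fixes S :: "real \<Rightarrow> 'a::metric_space \<Rightarrow> 'a"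
  assumes sg: "semigroup S" and bA: "bounded A" and inv: "invariant_set S A" and x: "x \<in> A"
  shows "x \<in> I_set S"
proof -
  have pre: "\<exists>z. z \<in> A \<and> S 1 z = y" if "y \<in> A" for y
  proof -
    have "S 1 ` A = A" using inv unfolding invariant_set_def by simp
    then show ?thesis using that by (metis imageE)
  qed
  define f where "f = (\<lambda>y. SOME z. z \<in> A \<and> S 1 z = y)"
  have f: "f y \<in> A \<and> S 1 (f y) = y" if "y \<in> A" for y
    unfolding f_def using someI_ex[OF pre[OF that]] .
  define xs where "xs = (\<lambda>n. (f ^^ n) x)"
  have xsA: "xs n \<in> A" for n by (induction n) (auto simp: xs_def f x)
  have xsS: "S 1 (xs (Suc n)) = xs n" for n using f[OF xsA[of n]] by (simp add: xs_def)
  have cons: "S (s + real (n + k)) (xs (n + k)) = S (s + real n) (xs n)"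
    if "s + real n \<ge> 0" for s n k
  proof (induction k)
    case 0 then show ?case by simp
  next
    case (Suc k)
    have "S (s + real (n + Suc k)) (xs (n + Suc k)) = S ((s + real (n + k)) + 1) (xs (Suc (n + k)))"
      by (simp add: algebra_simps)
    also have "\<dots> = S (s + real (n + k)) (S 1 (xs (Suc (n + k))))"
      using that by (intro sgadd[OF sg]) auto
    also have "\<dots> = S (s + real (n + k)) (xs (n + k))" by (simp add: xsS)
    finally show ?case using Suc by simp
  qed
  have cons2: "S (s + real m) (xs m) = S (s + real n) (xs n)"
    if "s + real n \<ge> 0" "n \<le> m" for s n m
    using cons[OF that(1), of "m - n"] that(2) by simp
  define N where "N = (\<lambda>s::real. nat \<lceil>- s\<rceil>)"
  have N: "s + real (N s) \<ge> 0" for s unfolding N_def by linarith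
  define \<xi> where "\<xi> = (\<lambda>s. S (s + real (N s)) (xs (N s)))"
  have ct: "complete_trajectory S \<xi>"
    unfolding complete_trajectory_def
  proof (intro allI impI)
    fix t s :: real assume t: "t \<ge> 0"
    have "N (t + s) \<le> N s" unfolding N_def using t by (intro nat_mono ceiling_mono) simp
    have "S t (\<xi> s) = S (t + (s + real (N s))) (xs (N s))"
      unfolding \<xi>_def using t N by (intro sgadd[OF sg, symmetric]) auto
    also have "\<dots> = S ((t + s) + real (N s)) (xs (N s))" by (simp add: add.assoc)
    also have "\<dots> = S ((t + s) + real (N (t + s))) (xs (N (t + s)))"
      by (rule cons2[OF N]) fact
    finally show "S t (\<xi> s) = \<xi> (t + s)" unfolding \<xi>_def .
  qed
  have "range \<xi> \<subseteq> A"
  proof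
    fix y assume "y \<in> range \<xi>"
    then obtain s where "y = \<xi> s" by auto
    moreover have "S (s + real (N s)) ` A = A" using inv N unfolding invariant_set_def by auto
    ultimately show "y \<in> A" unfolding \<xi>_def using xsA by blast
  qed
  then have bb: "bounded (range \<xi>)" using bA bounded_subset by blast
  have e0: "\<xi> 0 = x" unfolding \<xi>_def N_def xs_def using sg0[OF sg] by simp
  show ?thesis using memI[OF ct bb] unfolding e0 .
qed

lemma I_sub_J: "I_set S \<subseteq> J_set S"
proof
  fix x assume "x \<in> I_set S"
  then obtain \<xi> where xi: "x = \<xi> 0" "complete_trajectory S \<xi>" "bounded (range \<xi>)"
    unfolding I_set_def by blast
  have "bounded (\<xi> ` {..0})" by (rule bounded_subset[OF xi(3)]) auto
  from memJ[OF xi(2) this] show "x \<in> J_set S" unfolding xi(1) .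
qed

theorem mainTheorem8:
  fixes S :: "real \<Rightarrow> 'a::{real_inner, complete_space} \<Rightarrow> 'a"
  assumes "continuous_semigroup S"
  shows "invariant_set S (J_set S)
    \<and> (\<forall>D. closed D \<and> (\<forall>B. bounded B \<longrightarrow> ((\<lambda>t. semidist (S t ` B) D) \<longlongrightarrow> 0) at_top)
            \<longrightarrow> J_set S \<subseteq> D)
    \<and> (\<forall>A. A \<noteq> {} \<and> bounded A \<and> invariant_set S A
            \<longrightarrow> A \<subseteq> I_set S \<and> I_set S \<subseteq> J_set S \<and> J_set S \<noteq> {})"
proof (intro conjI allI impI)
  show "invariant_set S (J_set S)"
    unfolding invariant_set_def
  proof (intro allI impI equalityI)
    fix t :: real assume t: "t \<ge> 0"
    show "S t ` J_set S \<subseteq> J_set S" using J_forward[OF assms t] by (rule image_subsetI)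
    show "J_set S \<subseteq> S t ` J_set S" using J_backward[OF t] by (rule subsetI)
  qed
next
  fix D assume H: "closed D \<and> (\<forall>B. bounded B \<longrightarrow> ((\<lambda>t. semidist (S t ` B) D) \<longlongrightarrow> 0) at_top)"
  show "J_set S \<subseteq> D"
  proof
    fix x assume "x \<in> J_set S"
    from partB[OF conjunct1[OF H] conjunct2[OF H] this] show "x \<in> D" .
  qed
next
  fix A assume A: "A \<noteq> {} \<and> bounded A \<and> invariant_set S A"
  have sg: "semigroup S" using assms unfolding continuous_semigroup_def by simp
  show AI: "A \<subseteq> I_set S"
  proof
    fix x assume "x \<in> A"
    from A have "bounded A" "invariant_set S A" by simp_all
    from partC[OF sg this \<open>x \<in> A\<close>] show "x \<in> I_set S" .
  qed
  show "I_set S \<subseteq> J_set S" by (rule I_sub_J)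
  from A obtain a where "a \<in> A" by auto
  then have "a \<in> J_set S" using AI I_sub_J by auto
  then show "J_set S \<noteq> {}" by auto
qed

end
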